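(* Let $(X,d),(Y,d)$ be metric spaces, $E,F$ strictly convex normed spaces over $\mathbb{K}$, and $T:\mathrm{Lip}(X,E)\to\mathrm{Lip}(Y,F)$ a surjective linear isometry. If $y_0\in\mathfrak{A}(T)$, then $d(y_0,\mathfrak{B}(T))=1$.
   Context: $\mathbb{K}=\mathbb{R}$ or $\mathbb{C}$. Strictly convex: $\|e_1+e_2\|<2$ whenever $e_1\ne e_2$ have norm $1$. $\mathrm{Lip}(X,E)$: bounded Lipschitz maps $X\to E$ with norm $\|f\|_L=\max\{\|f\|_\infty,L(f)\}$, $L(f)$ the Lipschitz number. For $e\in E$, $\tilde e$ is the constant function with value $e$. $\mathfrak{A}(T)=\{y\in Y: T\tilde e(y)=0\ \forall e\in E\}$ and $\mathfrak{B}(T)=Y\setminus\mathfrak{A}(T)$; $d(y_0,B)=\inf_{b\in B}d(y_0,b)$. *)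

theory Defs
  imports "HOL-Analysis.Analysis"
begin

definition strictly_convex_space :: "'e::real_normed_vector itself \<Rightarrow> bool" where
  "strictly_convex_space _ \<longleftrightarrow>
     (\<forall>e1 e2 :: 'e. norm e1 = 1 \<and> norm e2 = 1 \<and> e1 \<noteq> e2 \<longrightarrow> norm (e1 + e2) < 2)"

definition Lip :: "('x::metric_space \<Rightarrow> 'e::real_normed_vector) set" where
  "Lip = {f. bounded (range f) \<and> (\<exists>L. L-lipschitz_on UNIV f)}"

definition lip_number :: "('x::metric_space \<Rightarrow> 'e::real_normed_vector) \<Rightarrow> real" where
  "lip_number f = Sup ({0} \<union> {dist (f x) (f y) / dist x y | x y. x \<noteq> y})"

definition sup_norm :: "('x \<Rightarrow> 'e::real_normed_vector) \<Rightarrow> real" where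
  "sup_norm f = Sup (range (\<lambda>x. norm (f x)))"

definition lip_norm :: "('x::metric_space \<Rightarrow> 'e::real_normed_vector) \<Rightarrow> real" where
  "lip_norm f = max (sup_norm f) (lip_number f)"

definition frakA :: "(('x \<Rightarrow> 'e) \<Rightarrow> ('y \<Rightarrow> 'f::zero)) \<Rightarrow> 'y set" where
  "frakA T = {y. \<forall>e. T (\<lambda>_. e) y = 0}"

definition frakB :: "(('x \<Rightarrow> 'e) \<Rightarrow> ('y \<Rightarrow> 'f::zero)) \<Rightarrow> 'y set" where
  "frakB T = UNIV - frakA T"

end

theory Submission
  imports Defs
begin

lemma Lip_bounds:
  fixes f :: "'x::metric_space \<Rightarrow> 'e::real_normed_vector"
  assumes "f \<in> Lip"
  shows "norm (f x) \<le> lip_norm f" "dist (f x) (f y) \<le> lip_norm f * dist x y"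
proof -
  from assms obtain B where B: "\<forall>z\<in>range f. norm z \<le> B" and L0: "\<exists>L. L-lipschitz_on UNIV f"
    unfolding Lip_def bounded_iff by auto
  then obtain L where L: "L-lipschitz_on UNIV f" by blast
  have bdd: "bdd_above (range (\<lambda>x. norm (f x)))" using B by (auto intro!: bdd_aboveI)
  have s: "norm (f z) \<le> sup_norm f" for z unfolding sup_norm_def by (rule cSup_upper) (use bdd in auto)
  let ?Q = "{0} \<union> {dist (f x) (f y) / dist x y | x y. x \<noteq> y}"
  have qb: "q \<le> L" if "q \<in> ?Q" for q
  proof -
    have L0': "0 \<le> L" using L by (auto simp: lipschitz_on_def)
    show ?thesis using that L0' lipschitz_onD[OF L UNIV_I UNIV_I]
      by (auto simp: pos_divide_le_eq)
  qed
  have bddQ: "bdd_above ?Q" using qb by (auto intro!: bdd_aboveI)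
  have qle: "q \<le> lip_number f" if "q \<in> ?Q" for q
    unfolding lip_number_def by (rule cSup_upper[OF that bddQ])
  have ln0: "0 \<le> lip_number f" using qle by auto
  have "norm (f x) \<le> sup_norm f" by (rule s)
  also have "\<dots> \<le> lip_norm f" by (simp add: lip_norm_def)
  finally show "norm (f x) \<le> lip_norm f" .
  have "dist (f x) (f y) \<le> lip_number f * dist x y"
  proof (cases "x = y")
    case True then show ?thesis by simp
  next
    case False
    then have "dist (f x) (f y) / dist x y \<le> lip_number f" by (intro qle) auto
    then show ?thesis using False by (simp add: pos_divide_le_eq)
  qed
  also have "\<dots> \<le> lip_norm f * dist x y" by (intro mult_right_mono) (auto simp: lip_norm_def)
  finally show "dist (f x) (f y) \<le> lip_norm f * dist x y" .
qed

lemma Lip_upper: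
  fixes f :: "'x::metric_space \<Rightarrow> 'e::real_normed_vector"
  assumes M: "0 \<le> M" and n: "\<And>x. norm (f x) \<le> M"
    and d: "\<And>x y. dist (f x) (f y) \<le> M * dist x y"
  shows "f \<in> Lip" "lip_norm f \<le> M"
proof -
  show "f \<in> Lip" unfolding Lip_def bounded_iff
    using n d M by (auto intro!: lipschitz_onI)
  have "sup_norm f \<le> M" unfolding sup_norm_def by (rule cSup_least) (use n in auto)
  moreover have "lip_number f \<le> M" unfolding lip_number_def
  proof (rule cSup_least)
    fix q assume "q \<in> {0} \<union> {dist (f x) (f y) / dist x y | x y. x \<noteq> y}"
    then show "q \<le> M" using M d by (auto simp: pos_divide_le_eq)
  qed auto
  ultimately show "lip_norm f \<le> M" by (simp add: lip_norm_def)
qed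

lemma lip_norm_const:
  fixes c :: "'e::real_normed_vector"
  shows "lip_norm ((\<lambda>_. c) :: 'x::metric_space \<Rightarrow> 'e) = norm c"
proof -
  have "sup_norm ((\<lambda>_. c) :: 'x \<Rightarrow> 'e) = norm c" by (simp add: sup_norm_def)
  moreover have "{0} \<union> {dist c c / dist x y | x y :: 'x. x \<noteq> y} \<subseteq> {0}" by auto
  then have "lip_number ((\<lambda>_. c) :: 'x \<Rightarrow> 'e) \<le> 0" unfolding lip_number_def
    by (intro cSup_least) auto
  moreover have "lip_number ((\<lambda>_. c) :: 'x \<Rightarrow> 'e) \<ge> 0" unfolding lip_number_def
    by (rule cSup_upper) (auto intro!: bdd_aboveI[where M=0])
  ultimately show ?thesis by (simp add: lip_norm_def)
qed

lemma Lip_const: "(\<lambda>_. c) \<in> (Lip :: ('x::metric_space \<Rightarrow> 'e::real_normed_vector) set)"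
  by (rule Lip_upper(1)[where M="norm c"]) auto

lemma Lip_add:
  fixes f g :: "'x::metric_space \<Rightarrow> 'e::real_normed_vector"
  assumes "f \<in> Lip" "g \<in> Lip"
  shows "(\<lambda>x. f x + g x) \<in> Lip"
proof (rule Lip_upper(1)[where M="lip_norm f + lip_norm g"])
  show "0 \<le> lip_norm f + lip_norm g"
    using Lip_bounds(1)[OF assms(1)] Lip_bounds(1)[OF assms(2)] by (meson add_nonneg_nonneg norm_ge_zero order_trans)
  fix x y
  show "norm (f x + g x) \<le> lip_norm f + lip_norm g"
    using Lip_bounds(1)[OF assms(1), of x] Lip_bounds(1)[OF assms(2), of x] norm_triangle_ineq[of "f x" "g x"] by linarith
  have "dist (f x + g x) (f y + g y) \<le> dist (f x) (f y) + dist (g x) (g y)" by (rule dist_triangle_add)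
  also have "\<dots> \<le> (lip_norm f + lip_norm g) * dist x y"
    using Lip_bounds(2)[OF assms(1), of x y] Lip_bounds(2)[OF assms(2), of x y] by (simp add: distrib_right)
  finally show "dist (f x + g x) (f y + g y) \<le> (lip_norm f + lip_norm g) * dist x y" .
qed

lemma Lip_scale:
  fixes f :: "'x::metric_space \<Rightarrow> 'e::real_normed_vector"
  assumes "f \<in> Lip"
  shows "(\<lambda>x. c *\<^sub>R f x) \<in> Lip"
proof (rule Lip_upper(1)[where M="\<bar>c\<bar> * lip_norm f"])
  have l0: "0 \<le> lip_norm f" using Lip_bounds(1)[OF assms] by (meson norm_ge_zero order_trans)
  then show "0 \<le> \<bar>c\<bar> * lip_norm f" by simp
  fix x y
  show "norm (c *\<^sub>R f x) \<le> \<bar>c\<bar> * lip_norm f"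
    using Lip_bounds(1)[OF assms, of x] by (simp add: mult_left_mono)
  have "dist (c *\<^sub>R f x) (c *\<^sub>R f y) = \<bar>c\<bar> * dist (f x) (f y)"
    by (simp add: dist_norm scaleR_right_diff_distrib[symmetric])
  also have "\<dots> \<le> \<bar>c\<bar> * (lip_norm f * dist x y)"
    using Lip_bounds(2)[OF assms, of x y] by (simp add: mult_left_mono)
  finally show "dist (c *\<^sub>R f x) (c *\<^sub>R f y) \<le> \<bar>c\<bar> * lip_norm f * dist x y" by (simp add: mult.assoc)
qed

lemma strict_conv_lemma:
  fixes e a :: "'e::real_normed_vector"
  assumes sc: "strictly_convex_space TYPE('e)" and e: "norm e = 1"
    and p: "norm (e + a) \<le> 1" and q: "norm (e - a) \<le> 1"
  shows "a = 0"
proof (rule ccontr)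
  assume a: "a \<noteq> 0"
  have s: "(e + a) + (e - a) = 2 *\<^sub>R e" by (simp add: scaleR_2)
  have n2: "norm ((e + a) + (e - a)) = 2" using e by (simp add: s)
  have "norm (e + a) \<ge> 1" using n2 q norm_triangle_ineq[of "e+a" "e-a"] by linarith
  then have pa: "norm (e + a) = 1" using p by simp
  have "norm (e - a) \<ge> 1" using n2 p norm_triangle_ineq[of "e+a" "e-a"] by linarith
  then have qa: "norm (e - a) = 1" using q by simp
  have "e + a \<noteq> e - a"
  proof
    assume "e + a = e - a"
    then have "a + a = 0" by (simp add: algebra_simps)
    then have "2 *\<^sub>R a = 0" by (simp add: scaleR_2)
    then show False using a by simp
  qed
  then have "norm ((e + a) + (e - a)) < 2" using sc pa qa unfolding strictly_convex_space_def by blast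
  then show False using n2 by simp
qed

lemma max_bump: "\<bar>max 0 (c - a) - max 0 (c - b)\<bar> \<le> \<bar>a - b\<bar>" for a b c :: real
  by (simp add: max_def abs_if)

lemma dist_scaleR_same: "dist (a *\<^sub>R v) (b *\<^sub>R v) = \<bar>a - b\<bar> * norm v"
  for v :: "'a::real_normed_vector"
  by (simp add: dist_norm scaleR_left_diff_distrib[symmetric])

lemma dist_metric_diff: "\<bar>dist y z - dist y' z\<bar> \<le> dist y y'" for y z y' :: "'a::metric_space"
  using dist_triangle[of y z y'] dist_triangle[of y' z y] by (simp add: dist_commute abs_le_iff)

theorem proposition5p2:
  fixes T :: "('x::metric_space \<Rightarrow> 'e::real_normed_vector) \<Rightarrow> ('y::metric_space \<Rightarrow> 'f::real_normed_vector)"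
    and y0 :: 'y
  assumes E_sc: "strictly_convex_space TYPE('e)"
    and F_sc: "strictly_convex_space TYPE('f)"
    and E_nontriv: "\<exists>e::'e. e \<noteq> 0"
    and T_maps: "\<And>f. f \<in> Lip \<Longrightarrow> T f \<in> Lip"
    and T_surj: "T ` Lip = Lip"
    and T_add: "\<And>f g. f \<in> Lip \<Longrightarrow> g \<in> Lip \<Longrightarrow> T (\<lambda>x. f x + g x) = (\<lambda>y. T f y + T g y)"
    and T_scale: "\<And>c f. f \<in> Lip \<Longrightarrow> T (\<lambda>x. c *\<^sub>R f x) = (\<lambda>y. c *\<^sub>R T f y)"
    and T_isom: "\<And>f. f \<in> Lip \<Longrightarrow> lip_norm (T f) = lip_norm f"
    and y0A: "y0 \<in> frakA T"
  shows "infdist y0 (frakB T) = 1"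
proof -
  have Tc: "T (\<lambda>_. c) \<in> Lip" for c :: 'e by (rule T_maps[OF Lip_const])
  have Tcn: "lip_norm (T (\<lambda>_. c)) = norm c" for c :: 'e
    using T_isom[OF Lip_const] lip_norm_const by metis
  have TA: "T (\<lambda>_. c) y0 = 0" for c :: 'e using y0A by (simp add: frakA_def)
  have T0: "T (\<lambda>_. 0) = (\<lambda>_. 0)" using T_scale[OF Lip_const[of "0::'e"], of 0] by simp
  have surj: "\<exists>f\<in>Lip. T f = k" if "k \<in> Lip" for k using that T_surj by (metis imageE)
  have far: "1 \<le> dist y0 y1" if y1B: "y1 \<in> frakB T" for y1
  proof (rule ccontr)
    assume "\<not> 1 \<le> dist y0 y1"
    define r where "r = dist y0 y1"
    have r1: "r < 1" and r0: "0 \<le> r" using \<open>\<not> 1 \<le> dist y0 y1\<close> by (auto simp: r_def)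
    obtain e where w0: "T (\<lambda>_. e) y1 \<noteq> 0" using y1B by (auto simp: frakB_def frakA_def)
    have Pu: "norm (T (\<lambda>_. u) y1) \<le> r * norm u" for u
    proof -
      have "dist (T (\<lambda>_. u) y1) (T (\<lambda>_. u) y0) \<le> lip_norm (T (\<lambda>_. u)) * dist y1 y0"
        by (rule Lip_bounds(2)[OF Tc])
      then show ?thesis by (simp add: TA Tcn r_def dist_commute mult.commute)
    qed
    define g where "g = T (\<lambda>_. e)"
    define w where "w = g y1"
    define s where "s = norm w"
    have s0: "s > 0" using w0 by (simp add: s_def w_def g_def)
    define v where "v = (1/s) *\<^sub>R w"
    have nv: "norm v = 1" using s0 by (simp add: v_def s_def)
    define k where "k = (\<lambda>y. max 0 (1 - dist y y1 / 2) *\<^sub>R v)"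
    have kn: "norm (k y) = max 0 (1 - dist y y1 / 2)" for y by (simp add: k_def nv)
    have kd: "dist (k y) (k y') \<le> dist y y' / 2" for y y'
    proof -
      have "dist (k y) (k y') = \<bar>max 0 (1 - dist y y1 / 2) - max 0 (1 - dist y' y1 / 2)\<bar>"
        by (simp add: k_def dist_scaleR_same nv)
      also have "\<dots> \<le> \<bar>dist y y1 / 2 - dist y' y1 / 2\<bar>" by (rule max_bump)
      also have "\<dots> = \<bar>dist y y1 - dist y' y1\<bar> / 2" by (simp add: abs_if field_simps)
      also have "\<dots> \<le> dist y y' / 2" using dist_metric_diff[of y y1 y'] by simp
      finally show ?thesis .
    qed
    have kA: "norm (k y) \<le> 1" for y by (simp add: kn)
    have kB: "dist (k y) (k y') \<le> 1 * dist y y'" for y y' using kd[of y y'] zero_le_dist[of "k y" "k y'"] by linarith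
    have kL: "k \<in> Lip" "lip_norm k \<le> 1" using Lip_upper[of 1 k, OF _ kA kB] by auto
    obtain f where f: "f \<in> Lip" "T f = k" using surj[OF kL(1)] by blast
    have fn: "lip_norm f \<le> 1" using T_isom[OF f(1)] f(2) kL(2) by simp
    have fx: "norm (f x) \<le> 1 - (1 - r) / 2" for x
    proof (cases "f x = 0")
      case True then show ?thesis using r0 by simp
    next
      case False
      define a where "a = f x"
      have a0: "norm a > 0" using False by (simp add: a_def)
      define u where "u = (1/2 / norm a) *\<^sub>R a"
      have nu: "norm u = 1/2" using a0 by (simp add: u_def)
      define G where "G = T (\<lambda>_. u)"
      have GL: "G \<in> Lip" "lip_norm G = 1/2" using Tc Tcn nu by (auto simp: G_def)
      have Gy1: "norm (G y1) \<le> r / 2" using Pu[of u] nu by (simp add: G_def)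
      have TF: "T (\<lambda>x. f x + u) = (\<lambda>y. k y + G y)"
        using T_add[OF f(1) Lip_const[of u]] f(2) by (simp add: G_def)
      have bnd: "lip_norm (\<lambda>y. k y + G y) \<le> 1 + r/2"
      proof (rule Lip_upper(2))
        show "0 \<le> 1 + r/2" using r0 by simp
        fix y y'
        have g1: "norm (G y) \<le> r/2 + dist y y1 / 2"
          using norm_triangle_ineq2[of "G y" "G y1"] Lip_bounds(2)[OF GL(1), of y y1] Gy1 GL(2)
          by (simp add: dist_norm)
        have g2: "norm (G y) \<le> 1/2" using Lip_bounds(1)[OF GL(1), of y] GL(2) by simp
        show "norm (k y + G y) \<le> 1 + r/2"
        proof (cases "dist y y1 < 2")
          case True
          then have "norm (k y) = 1 - dist y y1 / 2" by (simp add: kn)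
          then show ?thesis using norm_triangle_ineq[of "k y" "G y"] g1 by linarith
        next
          case False
          then have "norm (k y) = 0" by (simp add: kn)
          then show ?thesis using norm_triangle_ineq[of "k y" "G y"] g2 r0 by linarith
        qed
        have "dist (k y + G y) (k y' + G y') \<le> dist (k y) (k y') + dist (G y) (G y')"
          by (rule dist_triangle_add)
        also have "\<dots> \<le> dist y y' / 2 + 1/2 * dist y y'"
          using kd[of y y'] Lip_bounds(2)[OF GL(1), of y y'] unfolding GL(2) by linarith
        also have "\<dots> \<le> (1 + r/2) * dist y y'" using r0 by (simp add: algebra_simps)
        finally show "dist (k y + G y) (k y' + G y') \<le> (1 + r/2) * dist y y'" .
      qed
      have FL: "(\<lambda>x. f x + u) \<in> Lip" by (rule Lip_add[OF f(1) Lip_const])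
      have "norm (f x + u) \<le> lip_norm (\<lambda>x. f x + u)" by (rule Lip_bounds(1)[OF FL])
      also have "\<dots> = lip_norm (\<lambda>y. k y + G y)" using T_isom[OF FL] TF by simp
      finally have "norm (a + u) \<le> 1 + r/2" using bnd by (simp add: a_def)
      moreover have "a + u = (1 + 1/2 / norm a) *\<^sub>R a" by (simp add: u_def algebra_simps)
      then have "norm (a + u) = norm a + 1/2" using a0
        by (simp add: distrib_right)
      ultimately have "norm a \<le> 1/2 + r/2" by linarith
      then show ?thesis by (simp add: a_def field_simps)
    qed
    have e0: "e \<noteq> 0" using Pu[of e] w0 by auto
    define lam where "lam = (1 - r) / (4 * norm e)"
    have lam0: "lam > 0" using e0 r1 by (simp add: lam_def)
    have lne: "lam * norm e = (1 - r)/4" using e0 by (simp add: lam_def)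
    define H where "H = (\<lambda>x. f x + lam *\<^sub>R e)"
    have HL: "H \<in> Lip" "lip_norm H \<le> 1"
    proof -
      have A: "norm (H x) \<le> 1" for x
      proof -
        have "norm (H x) \<le> norm (f x) + (1 - r)/4"
          using norm_triangle_ineq[of "f x" "lam *\<^sub>R e"] lne lam0 by (simp add: H_def)
        then show ?thesis using fx[of x] r1 by (simp add: field_simps)
      qed
      have B: "dist (H x) (H x') \<le> 1 * dist x x'" for x x'
        using Lip_bounds(2)[OF f(1), of x x'] fn
        by (simp add: H_def dist_norm)
           (metis dual_order.trans mult_left_le_one_le mult.commute zero_le_dist dist_norm
              order_trans[OF _ mult_right_mono[of "lip_norm f" 1 "dist x x'"]] mult_1)
      show "H \<in> Lip" "lip_norm H \<le> 1" using Lip_upper[OF _ A B] by auto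
    qed
    have TH: "T H = (\<lambda>y. k y + lam *\<^sub>R g y)"
      using T_add[OF f(1) Lip_const[of "lam *\<^sub>R e"]] T_scale[OF Lip_const[of e], of lam] f(2)
      by (simp add: H_def g_def)
    have ky1: "k y1 = v" by (simp add: k_def)
    have "k y1 + lam *\<^sub>R g y1 = (1/s + lam) *\<^sub>R w" by (simp add: ky1 v_def w_def algebra_simps)
    then have eqn: "norm (k y1 + lam *\<^sub>R g y1) = 1 + lam * s" using s0 lam0
      by (simp add: s_def[symmetric] distrib_right)
    have "norm (k y1 + lam *\<^sub>R g y1) \<le> lip_norm (T H)"
      using Lip_bounds(1)[OF T_maps[OF HL(1)], of y1] by (simp add: TH)
    then have "1 + lam * s \<le> lip_norm H" using T_isom[OF HL(1)] eqn by simp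
    moreover have "lam * s > 0" using lam0 s0 by simp
    ultimately show False using HL(2) by linarith
  qed
  obtain e0 :: 'e where e0: "e0 \<noteq> 0" using E_nontriv by blast
  define e where "e = (1 / norm e0) *\<^sub>R e0"
  have ne: "norm e = 1" using e0 by (simp add: e_def)
  define g where "g = T (\<lambda>_. e)"
  have gL: "g \<in> Lip" "lip_norm g = 1" using Tc Tcn ne by (auto simp: g_def)
  obtain y' where y': "g y' \<noteq> 0"
  proof -
    have z: "lip_norm ((\<lambda>_. 0) :: 'y \<Rightarrow> 'f) = 0" by (simp add: lip_norm_const)
    have "g \<noteq> (\<lambda>_. 0)" using gL(2) z by auto
    then show ?thesis using that by blast
  qed
  have y'B: "y' \<in> frakB T" using y' by (auto simp: frakB_def frakA_def g_def)
  then have Bne: "frakB T \<noteq> {}" by blast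
  have ge: "1 \<le> infdist y0 (frakB T)"
    unfolding infdist_def using Bne far by (auto intro!: cINF_greatest)
  have le: "infdist y0 (frakB T) \<le> 1"
  proof (rule ccontr)
    assume nle: "\<not> infdist y0 (frakB T) \<le> 1"
    define R where "R = infdist y0 (frakB T)"
    have R1: "R > 1" using nle by (simp add: R_def)
    have gz: "g y = 0" if "dist y y0 < R" for y
    proof -
      have "y \<notin> frakB T"
        using infdist_le[of y "frakB T" y0] that by (auto simp: R_def dist_commute)
      then show ?thesis by (simp add: frakB_def frakA_def g_def)
    qed
    define v where "v = (1 / norm (g y')) *\<^sub>R g y'"
    have nv: "norm v = 1" using y' by (simp add: v_def)
    define \<rho> where "\<rho> = min 1 ((R - 1) / 2)"
    have \<rho>0: "\<rho> > 0" "\<rho> \<le> 1" "2 * \<rho> + 1 \<le> R" using R1 by (auto simp: \<rho>_def min_def field_simps)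
    define h where "h = (\<lambda>y. max 0 (\<rho> - dist y y0) *\<^sub>R v)"
    have hn: "norm (h y) = max 0 (\<rho> - dist y y0)" for y by (simp add: h_def nv)
    have hd: "dist (h y) (h y') \<le> dist y y'" for y y'
    proof -
      have "dist (h y) (h y') = \<bar>max 0 (\<rho> - dist y y0) - max 0 (\<rho> - dist y' y0)\<bar>"
        by (simp add: h_def dist_scaleR_same nv)
      also have "\<dots> \<le> \<bar>dist y y0 - dist y' y0\<bar>" by (rule max_bump)
      also have "\<dots> \<le> dist y y'" by (rule dist_metric_diff)
      finally show ?thesis .
    qed
    have hA: "norm (h y) \<le> 1" for y using hn[of y] \<rho>0 zero_le_dist[of y y0] by linarith
    have hL: "h \<in> Lip" using hA hd by (intro Lip_upper(1)[where M=1]) auto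
    have gb: "norm (g y) \<le> 1" "dist (g y) (g y') \<le> dist y y'" for y y'
      using Lip_bounds[OF gL(1)] gL(2) by auto
    have pm: "lip_norm (\<lambda>y. g y + c *\<^sub>R h y) \<le> 1" if c: "\<bar>c\<bar> = 1" for c
    proof (rule Lip_upper(2))
      show "(0::real) \<le> 1" by simp
      fix y y'
      show "norm (g y + c *\<^sub>R h y) \<le> 1"
      proof (cases "dist y y0 < \<rho>")
        case True
        then have "g y = 0" using gz \<rho>0 by simp
        then show ?thesis using hA[of y] c by simp
      next
        case False
        then have "h y = 0" by (simp add: h_def)
        then show ?thesis using gb by simp
      qed
      define a where "a = dist y y0"
      define b where "b = dist y' y0"
      have tri: "b \<le> dist y y' + a" "a \<le> dist y y' + b"
        using dist_triangle[of y' y0 y] dist_triangle[of y y0 y'] by (auto simp: a_def b_def dist_commute)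
      have "dist (g y + c *\<^sub>R h y) (g y' + c *\<^sub>R h y') \<le> dist y y'"
      proof (cases "a < R \<and> b < R")
        case True
        then have "g y = 0" "g y' = 0" using gz by (auto simp: a_def b_def)
        then show ?thesis using hd[of y y'] c
          by (simp add: dist_norm scaleR_right_diff_distrib[symmetric])
      next
        case nR: False
        show ?thesis
        proof (cases "\<rho> \<le> a \<and> \<rho> \<le> b")
          case True
          then have "h y = 0" "h y' = 0" by (auto simp: h_def a_def b_def)
          then show ?thesis using gb by simp
        next
          case False
          have bound: "dist (g p + c *\<^sub>R h p) (g q + c *\<^sub>R h q) \<le> dist p q"
            if "dist p y0 < \<rho>" "R \<le> dist q y0" for p q
          proof -
            have "g p = 0" using gz that \<rho>0 by simp
            moreover have "h q = 0" using that \<rho>0 by (simp add: h_def)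
            ultimately have "dist (g p + c *\<^sub>R h p) (g q + c *\<^sub>R h q) = norm (c *\<^sub>R h p - g q)"
              by (simp add: dist_norm)
            also have "\<dots> \<le> \<rho> + 1"
              using norm_triangle_ineq4[of "c *\<^sub>R h p" "g q"] hn[of p] c gb(1)[of q] that
              by simp (use zero_le_dist[of p y0] in linarith)
            also have "\<dots> \<le> dist p q"
              using \<rho>0 that dist_triangle[of q y0 p] by (simp add: dist_commute)
            finally show ?thesis .
          qed
          from nR False have "(a < \<rho> \<and> R \<le> b) \<or> (b < \<rho> \<and> R \<le> a)" using \<rho>0 by auto
          then show ?thesis
          proof
            assume "a < \<rho> \<and> R \<le> b" then show ?thesis using bound by (simp add: a_def b_def)
          next
            assume "b < \<rho> \<and> R \<le> a"
            then show ?thesis using bound[of y' y] by (simp add: a_def b_def dist_commute)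
          qed
        qed
      qed
      then show "dist (g y + c *\<^sub>R h y) (g y' + c *\<^sub>R h y') \<le> 1 * dist y y'" by simp
    qed
    obtain f where f: "f \<in> Lip" "T f = h" using surj[OF hL] by blast
    have fz: "f x = 0" for x
    proof -
      have n: "norm (e + c *\<^sub>R f x) \<le> 1" if c: "\<bar>c\<bar> = 1" for c
      proof -
        have L: "(\<lambda>x. e + c *\<^sub>R f x) \<in> Lip" by (rule Lip_add[OF Lip_const Lip_scale[OF f(1)]])
        have "T (\<lambda>x. e + c *\<^sub>R f x) = (\<lambda>y. g y + c *\<^sub>R h y)"
          using T_add[OF Lip_const Lip_scale[OF f(1)], of e c] T_scale[OF f(1), of c] f(2)
          by (simp add: g_def)
        then have "lip_norm (\<lambda>x. e + c *\<^sub>R f x) \<le> 1" using pm[OF c] T_isom[OF L] by simp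
        then show ?thesis using Lip_bounds(1)[OF L, of x] by simp
      qed
      show ?thesis using strict_conv_lemma[OF E_sc ne n[of 1] ] n[of "-1"] by simp
    qed
    then have "f = (\<lambda>_. 0)" by auto
    then have "h = (\<lambda>_. 0)" using f(2) T0 by simp
    then have "h y0 = 0" by simp
    then show False using \<rho>0 nv by (simp add: h_def)
  qed
  show ?thesis using ge le by simp
qed

end
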